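(* Let $I=(f_1,\ldots,f_r)\subset\mathbb{C}[x_1,\ldots,x_n]$ be an ideal generated by quasi-homogeneous polynomials (with respect to a common system of positive weights on $x_1,\ldots,x_n$), and let \[f_I(x_1,\ldots,x_n,y_1,\ldots,y_r)=\sum_{i=1}^r y_i f_i(x_1,\ldots,x_n).\] Then $f_I$ is a quasi-homogeneous polynomial (for suitable positive weights on the $y_i$), and its global Milnor fibre $f_I^{-1}(1)\subset\mathbb{C}^{n+r}$ is homotopy equivalent to $\mathbb{C}^n\setminus V(I)$, where $V(I)$ is the zero set of $I$.
   Context: A polynomial $g$ is quasi-homogeneous with respect to positive weights $w_1,\ldots,w_N$ if $g(t^{w_1}z_1,\ldots,t^{w_N}z_N)=t^d g(z)$ for some $d$; an ideal is quasi-homogeneous if generated by such polynomials for common weights. The global Milnor fibre of a quasi-homogeneous polynomial $g$ is $g^{-1}(1)$. *)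

theory Defs
  imports "HOL-Analysis.Analysis"
begin

definition poly_fun :: "(complex^'v::finite \<Rightarrow> complex) \<Rightarrow> bool" where
  "poly_fun g \<longleftrightarrow> (\<exists>M :: ('v \<Rightarrow> nat) set. \<exists>c. finite M \<and>
      (\<forall>z. g z = (\<Sum>m\<in>M. c m * (\<Prod>v\<in>UNIV. (z$v) ^ m v))))"

definition quasi_hom :: "('v::finite \<Rightarrow> nat) \<Rightarrow> nat \<Rightarrow> (complex^'v \<Rightarrow> complex) \<Rightarrow> bool" where
  "quasi_hom w d g \<longleftrightarrow> (\<forall>t::complex. \<forall>z. g (\<chi> v. t ^ w v * z$v) = t ^ d * g z)"

definition pos_weights :: "('v \<Rightarrow> nat) \<Rightarrow> bool" where
  "pos_weights w \<longleftrightarrow> (\<forall>v. w v > 0)"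

text \<open>The polynomial f_I(x,y) = sum_i y_i f_i(x) on C^(n+r); x-variables are Inl, y-variables Inr.\<close>
definition fI :: "('r::finite \<Rightarrow> complex^'n::finite \<Rightarrow> complex) \<Rightarrow> complex^('n + 'r) \<Rightarrow> complex" where
  "fI f z = (\<Sum>i\<in>UNIV. z$(Inr i) * f i (\<chi> v. z$(Inl v)))"

definition zero_set :: "('r \<Rightarrow> complex^'n::finite \<Rightarrow> complex) \<Rightarrow> (complex^'n) set" where
  "zero_set f = {x. \<forall>i. f i x = 0}"

definition join_weights :: "('n \<Rightarrow> nat) \<Rightarrow> ('r \<Rightarrow> nat) \<Rightarrow> ('n + 'r) \<Rightarrow> nat" where
  "join_weights wx wy = case_sum wx wy"

end

theory Submission
  imports Defs
begin

lemma poly_fun_intro: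
  fixes g :: "complex^'v::finite \<Rightarrow> complex" and A :: "'a set"
  assumes "finite A" "\<And>z. g z = (\<Sum>k\<in>A. c k * (\<Prod>v\<in>UNIV. (z$v) ^ mm k v))"
  shows "poly_fun g"
proof -
  define c' where "c' m = (\<Sum>k\<in>{k\<in>A. mm k = m}. c k)" for m
  have "g z = (\<Sum>m\<in>mm ` A. c' m * (\<Prod>v\<in>UNIV. (z$v) ^ m v))" for z
  proof -
    have "g z = (\<Sum>m\<in>mm ` A. \<Sum>k\<in>{k\<in>A. mm k = m}. c k * (\<Prod>v\<in>UNIV. (z$v) ^ mm k v))"
      using assms sum.image_gen[OF assms(1), of "\<lambda>k. c k * (\<Prod>v\<in>UNIV. (z$v) ^ mm k v)" mm]
      by simp
    also have "\<dots> = (\<Sum>m\<in>mm ` A. c' m * (\<Prod>v\<in>UNIV. (z$v) ^ m v))"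
      unfolding c'_def sum_distrib_right by (intro sum.cong refl) auto
    finally show ?thesis .
  qed
  then show ?thesis unfolding poly_fun_def using assms(1) by blast
qed

lemma poly_fun_cont:
  fixes g :: "complex^'v::finite \<Rightarrow> complex"
  assumes "poly_fun g"
  shows "continuous_on S g"
proof -
  obtain M c where "\<forall>z. g z = (\<Sum>m\<in>M. c m * (\<Prod>v\<in>UNIV. (z$v) ^ m v))"
    using assms unfolding poly_fun_def by blast
  then have "g = (\<lambda>z. \<Sum>m\<in>M. c m * (\<Prod>v\<in>UNIV. (z$v) ^ m v))" by auto
  then show ?thesis by (simp add: continuous_intros)
qed

theorem mainTheorem2:
  fixes f :: "'r::finite \<Rightarrow> complex^'n::finite \<Rightarrow> complex"
    and w :: "'n \<Rightarrow> nat" and d :: "'r \<Rightarrow> nat"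
  assumes "\<And>i. poly_fun (f i)"
    and "pos_weights w"
    and "\<And>i. quasi_hom w (d i) (f i)"
  shows "poly_fun (fI f)
    \<and> (\<exists>wy :: 'r \<Rightarrow> nat. \<exists>e. pos_weights wy \<and> quasi_hom (join_weights w wy) e (fI f))
    \<and> ((fI f) -` {1}) homotopy_eqv (UNIV - zero_set f)"
proof (intro conjI)
  show "poly_fun (fI f)"
    proof -
    have "\<forall>i. \<exists>M c. finite M \<and> (\<forall>z. f i z = (\<Sum>m\<in>M. c m * (\<Prod>v\<in>UNIV. (z$v) ^ m v)))"
      using assms(1) unfolding poly_fun_def by blast
    then obtain M c where Mc: "\<And>i. finite (M i)"
      "\<And>i z. f i z = (\<Sum>m\<in>M i. c i m * (\<Prod>v\<in>UNIV. (z$v) ^ m v))"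
      by metis
    define E where "E i m = (\<lambda>u. case u of Inl v \<Rightarrow> m v | Inr j \<Rightarrow> (if j = i then 1 else 0::nat))"
      for i :: 'r and m :: "'n \<Rightarrow> nat"
    have prodE: "(\<Prod>u\<in>UNIV. (z$u) ^ E i m u) = z$Inr i * (\<Prod>v\<in>UNIV. (z$Inl v) ^ m v)"
      for z :: "complex^('n+'r)" and i m
    proof -
      have "(\<Prod>u\<in>UNIV. (z$u) ^ E i m u) = (\<Prod>u\<in>range Inl. (z$u) ^ E i m u) * (\<Prod>u\<in>range Inr. (z$u) ^ E i m u)"
        by (subst UNIV_sum, rule prod.union_disjoint) auto
      also have "(\<Prod>u\<in>range Inl. (z$u) ^ E i m u) = (\<Prod>v\<in>UNIV. (z$Inl v) ^ m v)"
        by (subst prod.reindex) (auto simp: E_def)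
      also have "(\<Prod>u\<in>range Inr. (z$u) ^ E i m u) = (\<Prod>j\<in>UNIV. if j = i then z$Inr i else 1)"
      proof -
        have "(\<Prod>u\<in>range Inr. (z$u) ^ E i m u) = (\<Prod>j\<in>UNIV. (z$Inr j) ^ E i m (Inr j))"
          by (subst prod.reindex) auto
        also have "\<dots> = (\<Prod>j\<in>UNIV. if j = i then z$Inr i else 1)"
          by (rule prod.cong) (auto simp: E_def)
        finally show ?thesis .
      qed
      also have "\<dots> = z$Inr i" by (simp add: prod.delta)
      finally show ?thesis by simp
    qed
    have "fI f z = (\<Sum>p\<in>(SIGMA i:UNIV. M i). c (fst p) (snd p) * (\<Prod>u\<in>UNIV. (z$u) ^ E (fst p) (snd p) u))"
      for z
    proof -
      have "fI f z = (\<Sum>i\<in>UNIV. \<Sum>m\<in>M i. c i m * (\<Prod>u\<in>UNIV. (z$u) ^ E i m u))"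
        unfolding fI_def Mc(2) prodE
        by (simp add: sum_distrib_left mult_ac)
      also have "\<dots> = (\<Sum>p\<in>(SIGMA i:UNIV. M i). c (fst p) (snd p) * (\<Prod>u\<in>UNIV. (z$u) ^ E (fst p) (snd p) u))"
        by (subst sum.Sigma) (auto simp: Mc(1) case_prod_beta)
      finally show ?thesis .
    qed
    then show ?thesis
      by (intro poly_fun_intro[where A="SIGMA i:UNIV. M i"]) (auto simp: Mc(1))
  qed
  show "\<exists>wy :: 'r \<Rightarrow> nat. \<exists>e. pos_weights wy \<and> quasi_hom (join_weights w wy) e (fI f)"
    proof -
    define e where "e = Suc (Max (range d))"
    have de: "d i < e" for i unfolding e_def by (simp add: le_imp_less_Suc)
    have "pos_weights (\<lambda>i. e - d i)" unfolding pos_weights_def using de by simp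
    moreover have "quasi_hom (join_weights w (\<lambda>i. e - d i)) e (fI f)"
      unfolding quasi_hom_def
    proof (intro allI)
      fix t :: complex and z :: "complex^('n+'r)"
      have "fI f (\<chi> v. t ^ join_weights w (\<lambda>i. e - d i) v * z$v)
          = (\<Sum>i\<in>UNIV. (t ^ (e - d i) * z$Inr i) * f i (\<chi> v. t ^ w v * z$Inl v))"
        unfolding fI_def join_weights_def by simp
      also have "\<dots> = (\<Sum>i\<in>UNIV. (t ^ (e - d i) * z$Inr i) * (t ^ d i * f i (\<chi> v. z$Inl v)))"
      proof (rule sum.cong[OF refl])
        fix i
        have "f i (\<chi> v. t ^ w v * (\<chi> v. z$Inl v)$v) = t ^ d i * f i (\<chi> v. z$Inl v)"
          using assms(3)[of i] unfolding quasi_hom_def by blast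
        then show "(t ^ (e - d i) * z$Inr i) * f i (\<chi> v. t ^ w v * z$Inl v)
            = (t ^ (e - d i) * z$Inr i) * (t ^ d i * f i (\<chi> v. z$Inl v))" by simp
      qed
      also have "\<dots> = (\<Sum>i\<in>UNIV. t ^ (e - d i + d i) * (z$Inr i * f i (\<chi> v. z$Inl v)))"
        by (simp add: power_add mult_ac)
      also have "\<dots> = t ^ e * fI f z"
        unfolding fI_def using de by (simp add: sum_distrib_left less_imp_le)
      finally show "fI f (\<chi> v. t ^ join_weights w (\<lambda>i. e - d i) v * z$v) = t ^ e * fI f z" .
    qed
    ultimately show ?thesis by blast
  qed
  show "((fI f) -` {1}) homotopy_eqv (UNIV - zero_set f)"
    proof -
    define S where "S = (fI f) -` {1}"
    define T where "T = UNIV - zero_set f"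
    define p :: "complex^('n+'r) \<Rightarrow> complex^'n" where "p z = (\<chi> v. z$Inl v)" for z
    define N where "N x = (\<Sum>j\<in>UNIV. (cmod (f j x))^2)" for x
    define g :: "complex^'n \<Rightarrow> complex^('n+'r)" where
      "g x = (\<chi> u. case u of Inl v \<Rightarrow> x$v | Inr i \<Rightarrow> cnj (f i x) / of_real (N x))" for x
    have contf: "continuous_on A (f i)" for A i using poly_fun_cont[OF assms(1)] .
    have fIp: "fI f z = (\<Sum>i\<in>UNIV. z$Inr i * f i (p z))" for z unfolding fI_def p_def ..
    have Npos: "N x \<noteq> 0" if "x \<in> T" for x
    proof
      assume "N x = 0"
      then have "\<forall>j\<in>UNIV. (cmod (f j x))^2 = 0"
        unfolding N_def by (subst sum_nonneg_eq_0_iff[symmetric]) auto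
      then have "x \<in> zero_set f" unfolding zero_set_def by simp
      then show False using that unfolding T_def by blast
    qed
    have contp: "continuous_on A p" for A unfolding p_def by (intro continuous_intros)
    have contN: "continuous_on A N" for A unfolding N_def by (intro continuous_intros contf)
    have contg: "continuous_on T g" unfolding g_def
    proof (intro continuous_on_vec_lambda)
      fix u :: "'n+'r"
      show "continuous_on T (\<lambda>x. case u of Inl v \<Rightarrow> x$v | Inr i \<Rightarrow> cnj (f i x) / of_real (N x))"
      proof (cases u)
        case (Inl v) then show ?thesis by (simp add: continuous_intros)
      next
        case (Inr i) then show ?thesis using Npos
          by (simp, intro continuous_intros contf contN) auto
      qed
    qed
    have pg: "p (g x) = x" for x unfolding p_def g_def by (simp add: vec_eq_iff)
    have pS: "p \<in> S \<rightarrow> T"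
    proof
      fix z assume "z \<in> S"
      then have "fI f z = 1" unfolding S_def by simp
      then show "p z \<in> T" unfolding T_def zero_set_def fIp
        using sum.neutral[of UNIV "\<lambda>i. z$Inr i * f i (p z)"] by auto
    qed
    have gT: "g \<in> T \<rightarrow> S"
    proof
      fix x assume x: "x \<in> T"
      have "fI f (g x) = (\<Sum>i\<in>UNIV. cnj (f i x) / of_real (N x) * f i x)"
        unfolding fIp pg by (simp add: g_def)
      also have "\<dots> = (\<Sum>i\<in>UNIV. of_real ((cmod (f i x))^2)) / of_real (N x)"
        unfolding complex_norm_square sum_divide_distrib by (simp add: mult_ac)
      also have "\<dots> = of_real (N x) / of_real (N x)" unfolding N_def of_real_sum ..
      also have "\<dots> = 1" using Npos[OF x] by simp
      finally show "g x \<in> S" unfolding S_def by simp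
    qed
    have comb: "fI f ((1 - u) *\<^sub>R a + u *\<^sub>R b) = (1 - of_real u) * fI f a + of_real u * fI f b"
      if "p a = p b" for a b u
    proof -
      have ab: "a$Inl v = b$Inl v" for v using that unfolding p_def vec_eq_iff by simp
      have "p ((1 - u) *\<^sub>R a + u *\<^sub>R b) = p a"
        unfolding p_def vec_eq_iff using ab by (simp add: algebra_simps)
      then have "fI f ((1 - u) *\<^sub>R a + u *\<^sub>R b) = (\<Sum>i\<in>UNIV. ((1 - u) *\<^sub>R a$Inr i + u *\<^sub>R b$Inr i) * f i (p a))"
        unfolding fIp by simp
      also have "\<dots> = (1 - of_real u) * fI f a + of_real u * fI f b"
        unfolding fIp that
        by (simp add: scaleR_conv_of_real algebra_simps sum.distrib sum_distrib_left sum_subtractf)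
      finally show ?thesis .
    qed
    have h1: "homotopic_with_canon (\<lambda>x. True) S S (g \<circ> p) id"
    proof (rule homotopic_with_linear)
      show "continuous_on S (g \<circ> p)"
        by (rule continuous_on_compose[OF contp continuous_on_subset[OF contg]]) (use pS in auto)
      show "continuous_on S id" by (simp add: id_def continuous_on_id)
      fix z assume z: "z \<in> S"
      show "closed_segment ((g \<circ> p) z) (id z) \<subseteq> S"
      proof
        fix y assume "y \<in> closed_segment ((g \<circ> p) z) (id z)"
        then obtain u where y: "y = (1 - u) *\<^sub>R g (p z) + u *\<^sub>R z" by (auto simp: in_segment)
        have "fI f (g (p z)) = 1" using gT pS z unfolding S_def by auto
        moreover have "fI f z = 1" using z unfolding S_def by auto
        ultimately have "fI f y = 1" unfolding y by (subst comb) (auto simp: pg algebra_simps)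
        then show "y \<in> S" unfolding S_def by simp
      qed
    qed
    have h2: "homotopic_with_canon (\<lambda>x. True) T T (p \<circ> g) id"
    proof (rule homotopic_with_linear)
      show "continuous_on T (p \<circ> g)" by (rule continuous_on_compose[OF contg contp])
      show "continuous_on T id" by (simp add: id_def continuous_on_id)
      fix x assume "x \<in> T"
      then show "closed_segment ((p \<circ> g) x) (id x) \<subseteq> T" by (simp add: pg)
    qed
    show ?thesis
      unfolding S_def[symmetric] T_def[symmetric] homotopy_equivalent_space_def
      using h1 h2 pS gT contg contp by (intro exI[of _ p] exI[of _ g]) auto
  qed
qed

end
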